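(* Let $R=\mathbb{R}[t]/(t^2)$ and let $A$ be the evolution algebra over $R$ with basis $\{x_i:i\in\mathbb{N}\}$ and multiplication determined by $x_ix_i=tx_i+x_{i+1}$ and $x_ix_j=0$ for $i\ne j$. Then $A$ is nil but not nilpotent.
   Context: An evolution algebra over a commutative ring $R$ is a free $R$-module with basis $\{x_i\}$ and $R$-bilinear multiplication determined by $x_ix_j=0$ for $i\ne j$ and $x_i^2=\sum_k c_{ki}x_k$. Principal powers: $a^1=a$, $a^n=a^{n-1}a$; $A^1=A$, $A^n=A^{n-1}A$ ($R$-span of products). $A$ is nil if every element has some principal power equal to $0$; nilpotent if $A^n=(0)$ for some $n$. *)

theory Defs
  imports Complex_Main
begin

section \<open>The ring R = real[t]/(t^2) (dual numbers a + b t)\<close>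

datatype dual = Dual (re: real) (ep: real)

instantiation dual :: comm_ring_1
begin
definition "zero_dual = Dual 0 0"
definition "one_dual = Dual 1 0"
definition "plus_dual x y = Dual (re x + re y) (ep x + ep y)"
definition "minus_dual x y = Dual (re x - re y) (ep x - ep y)"
definition "uminus_dual x = Dual (- re x) (- ep x)"
definition "times_dual x y = Dual (re x * re y) (re x * ep y + ep x * re y)"
instance
  by intro_classes
     (auto simp: zero_dual_def one_dual_def plus_dual_def minus_dual_def
                 uminus_dual_def times_dual_def dual.expand algebra_simps)
end

definition dual_t :: dual where "dual_t = Dual 0 1"

text \<open>Elements of the free module with basis indexed by nat: finitely supported
  coefficient functions; the element is \<Sum> a i x_i.\<close>
definition fsupp :: "(nat \<Rightarrow> 'r::comm_ring_1) set" where
  "fsupp = {a. finite {i. a i \<noteq> 0}}"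

text \<open>Structure constants: x_i^2 = \<Sum>_k c k i x_k, x_i x_j = 0 for i \<noteq> j.
  Bilinear extension: (\<Sum> a_i x_i)(\<Sum> b_j x_j) = \<Sum>_i a_i b_i x_i^2.\<close>
definition evo_mult :: "(nat \<Rightarrow> nat \<Rightarrow> 'r::comm_ring_1) \<Rightarrow> (nat \<Rightarrow> 'r) \<Rightarrow> (nat \<Rightarrow> 'r) \<Rightarrow> (nat \<Rightarrow> 'r)" where
  "evo_mult c a b = (\<lambda>k. \<Sum>i\<in>{i. a i \<noteq> 0}. a i * b i * c k i)"

text \<open>Principal powers a^1 = a, a^(n+1) = a^n a (index 0 unused).\<close>
fun ppow :: "(nat \<Rightarrow> nat \<Rightarrow> 'r::comm_ring_1) \<Rightarrow> (nat \<Rightarrow> 'r) \<Rightarrow> nat \<Rightarrow> (nat \<Rightarrow> 'r)" where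
  "ppow c a 0 = a"
| "ppow c a (Suc 0) = a"
| "ppow c a (Suc (Suc n)) = evo_mult c (ppow c a (Suc n)) a"

inductive_set rspan :: "(nat \<Rightarrow> 'r::comm_ring_1) set \<Rightarrow> (nat \<Rightarrow> 'r) set" for S where
  zero: "(\<lambda>_. 0) \<in> rspan S"
| base: "x \<in> S \<Longrightarrow> x \<in> rspan S"
| add: "x \<in> rspan S \<Longrightarrow> y \<in> rspan S \<Longrightarrow> (\<lambda>k. x k + y k) \<in> rspan S"
| smult: "x \<in> rspan S \<Longrightarrow> (\<lambda>k. r * x k) \<in> rspan S"

text \<open>Principal powers of the algebra: A^1 = A, A^(n+1) = span(A^n A) (index 0 unused).\<close>
fun apow :: "(nat \<Rightarrow> nat \<Rightarrow> 'r::comm_ring_1) \<Rightarrow> nat \<Rightarrow> (nat \<Rightarrow> 'r) set" where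
  "apow c 0 = fsupp"
| "apow c (Suc 0) = fsupp"
| "apow c (Suc (Suc n)) = rspan {evo_mult c u v | u v. u \<in> apow c (Suc n) \<and> v \<in> fsupp}"

definition evo_nil :: "(nat \<Rightarrow> nat \<Rightarrow> 'r::comm_ring_1) \<Rightarrow> bool" where
  "evo_nil c \<longleftrightarrow> (\<forall>a\<in>fsupp. \<exists>n\<ge>1. ppow c a n = (\<lambda>_. 0))"

definition evo_nilpotent :: "(nat \<Rightarrow> nat \<Rightarrow> 'r::comm_ring_1) \<Rightarrow> bool" where
  "evo_nilpotent c \<longleftrightarrow> (\<exists>n\<ge>1. apow c n = {\<lambda>_. 0})"

definition ex_c :: "nat \<Rightarrow> nat \<Rightarrow> dual" where
  "ex_c k i = (if k = i then dual_t else if k = Suc i then 1 else 0)"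

end

theory Submission
  imports Defs
begin

lemma dual_eq0: "x = (0::dual) \<longleftrightarrow> re x = 0 \<and> ep x = 0"
  by (cases x) (simp add: zero_dual_def)

lemma re_mult[simp]: "re (x * y) = re x * re y" by (simp add: times_dual_def)
lemma re_add[simp]: "re (x + y) = re x + re y" by (simp add: plus_dual_def)
lemma re_t[simp]: "re dual_t = 0" by (simp add: dual_t_def)
lemma re_zero[simp]: "re 0 = 0" by (simp add: zero_dual_def)
lemma re_one[simp]: "re 1 = 1" by (simp add: one_dual_def)

lemma t_re0: "re b = 0 \<Longrightarrow> a * b * dual_t = 0"
  by (simp add: dual_eq0 times_dual_def dual_t_def)

lemma em:
  assumes "finite {i. u i \<noteq> 0}"
  shows "evo_mult ex_c u v k = u k * v k * dual_t + (if k = 0 then 0 else u (k-1) * v (k-1))"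
proof -
  define f where "f i = u i * v i * ex_c k i" for i
  define S where "S = {i. u i \<noteq> 0}"
  define T where "T = {k, k-1}"
  have fin: "finite (S \<union> T)" using assms S_def T_def by auto
  have "sum f S = sum f (S \<union> T)"
    by (rule sum.mono_neutral_left) (use fin S_def f_def in auto)
  also have "\<dots> = sum f T"
    by (rule sum.mono_neutral_right) (use fin S_def f_def T_def ex_c_def in auto)
  also have "\<dots> = u k * v k * dual_t + (if k = 0 then 0 else u (k-1) * v (k-1))"
    by (cases k) (auto simp: T_def f_def ex_c_def)
  finally show ?thesis by (simp add: evo_mult_def f_def S_def)
qed

lemma nil_part:
  assumes a: "a \<in> fsupp"
  shows "\<exists>n\<ge>1. ppow ex_c a n = (\<lambda>_. 0)"
proof -
  have fa: "finite {i. a i \<noteq> 0}" using a by (simp add: fsupp_def)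
  define q where "q = Max ({i. a i \<noteq> 0} \<union> {0})"
  have aq: "k > q \<Longrightarrow> a k = 0" for k
    using fa Max_ge[of "{i. a i \<noteq> 0} \<union> {0}"] unfolding q_def
    by (metis (mono_tags, lifting) UnCI finite_Un finite.emptyI finite_insert leD mem_Collect_eq)
  have inv: "(\<forall>k. k + 1 < n \<longrightarrow> ppow ex_c a (Suc n) k = 0) \<and>
             (\<forall>k. k < n \<longrightarrow> re (ppow ex_c a (Suc n) k) = 0) \<and>
             (\<forall>k. k > q + 1 \<longrightarrow> ppow ex_c a (Suc n) k = 0)" for n
  proof (induction n)
    case 0
    then show ?case using aq by auto
  next
    case (Suc n)
    define b where "b = ppow ex_c a (Suc n)"
    have IH1: "\<And>k. k + 1 < n \<Longrightarrow> b k = 0" and IH2: "\<And>k. k < n \<Longrightarrow> re (b k) = 0"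
      and IH3: "\<And>k. k > q + 1 \<Longrightarrow> b k = 0" using Suc b_def by auto
    have fb: "finite {i. b i \<noteq> 0}"
      by (rule finite_subset[of _ "{..q+1}"]) (use IH3 in \<open>auto simp: not_less[symmetric]\<close>)
    have eq: "ppow ex_c a (Suc (Suc n)) k = b k * a k * dual_t + (if k = 0 then 0 else b (k-1) * a (k-1))" for k
      using em[OF fb] b_def by simp
    show ?case
    proof (intro conjI allI impI)
      fix k assume "k + 1 < Suc n"
      then show "ppow ex_c a (Suc (Suc n)) k = 0"
        unfolding eq using IH1[of "k-1"] IH2[of k] t_re0[of "b k" "a k"]
        by (cases k) (auto simp: algebra_simps)
    next
      fix k assume "k < Suc n"
      then show "re (ppow ex_c a (Suc (Suc n)) k) = 0"
        unfolding eq using IH2[of "k-1"] by (cases k) auto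
    next
      fix k assume "k > q + 1"
      then show "ppow ex_c a (Suc (Suc n)) k = 0"
        unfolding eq using aq[of k] aq[of "k-1"] by auto
    qed
  qed
  have "ppow ex_c a (Suc (q+3)) = (\<lambda>_. 0)"
  proof
    fix k
    show "ppow ex_c a (Suc (q+3)) k = 0"
      using inv[of "q+3"] by (cases "k + 1 < q + 3") auto
  qed
  then show ?thesis by (intro exI[of _ "Suc (q+3)"]) auto
qed

lemma nonzero_apow: "\<exists>u\<in>apow ex_c (Suc n). u \<in> fsupp \<and> u \<noteq> (\<lambda>_. 0)"
proof (induction n)
  case 0
  let ?u = "\<lambda>k. if k = 0 then (1::dual) else 0"
  have "?u \<in> fsupp" unfolding fsupp_def by (rule CollectI, rule finite_subset[of _ "{0}"]) auto
  moreover have "?u \<noteq> (\<lambda>_. 0)" by (metis zero_neq_one)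
  ultimately show ?case by auto
next
  case (Suc n)
  then obtain u where u: "u \<in> apow ex_c (Suc n)" "u \<in> fsupp" "u \<noteq> (\<lambda>_. 0)" by blast
  then obtain j where j: "u j \<noteq> 0" by auto
  define v where "v = (\<lambda>k. if k = j then (1::dual) else 0)"
  have vf: "v \<in> fsupp" unfolding fsupp_def v_def
    by (rule CollectI, rule finite_subset[of _ "{j}"]) auto
  have fu: "finite {i. u i \<noteq> 0}" using u by (simp add: fsupp_def)
  define w where "w = evo_mult ex_c u v"
  have w: "w k = u k * v k * dual_t + (if k = 0 then 0 else u (k-1) * v (k-1))" for k
    unfolding w_def by (rule em[OF fu])
  have "w (Suc j) = u j" using w[of "Suc j"] by (simp add: v_def)
  hence wnz: "w \<noteq> (\<lambda>_. 0)" using j by auto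
  have "w \<in> fsupp" unfolding fsupp_def
    by (rule CollectI, rule finite_subset[of _ "{j, Suc j}"]) (auto simp: w v_def split: if_splits)
  moreover have "w \<in> apow ex_c (Suc (Suc n))"
    using u(1) vf by (auto simp: w_def intro!: rspan.base)
  ultimately show ?case using wnz by blast
qed

theorem mainTheorem10:
  shows "evo_nil ex_c \<and> \<not> evo_nilpotent ex_c"
proof
  show "evo_nil ex_c" unfolding evo_nil_def using nil_part by blast
  show "\<not> evo_nilpotent ex_c"
  proof
    assume "evo_nilpotent ex_c"
    then obtain n where n: "n \<ge> 1" "apow ex_c n = {\<lambda>_. 0}" by (auto simp: evo_nilpotent_def)
    then obtain m where "n = Suc m" by (cases n) auto
    then show False using nonzero_apow[of m] n by auto
  qed
qed

end
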